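(* Let $f(m_\ell, m_s)$ be any function with $f(m_\ell,m_s) = o(m_\ell + m_s)$. Then for all sufficiently large $m_\ell m_s$, on the $m_\ell \times m_s$ grid $G$ (with $m_\ell \ge m_s \ge 2$), the fraction of instances $(G, X_I, X_G)$ (over all pairs of configurations with all vertices occupied) whose minimum makespan is at most $f(m_\ell, m_s)$ is at most $(1/2)^{m_\ell/4}$.
   Context: The $m_\ell \times m_s$ grid graph has vertex set $\{1,\dots,m_\ell\}\times\{1,\dots,m_s\}$ with edges between vertices at $\ell_1$-distance 1. A configuration is a bijection from robot labels $\{1,\dots,m_\ell m_s\}$ to the vertex set. A move sequence proceeds in synchronous steps: each robot stays put or moves to an adjacent vertex, with no two robots at the same vertex afterwards and no two robots traversing the same edge in opposite directions. The minimum makespan of $(G,X_I,X_G)$ is the least number of steps of such a sequence taking $X_I$ to $X_G$. *)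

theory Defs
  imports Complex_Main "HOL-Library.FuncSet"
begin

definition grid_vertices :: "nat \<Rightarrow> nat \<Rightarrow> (nat \<times> nat) set" where
  "grid_vertices ml ms = {1..ml} \<times> {1..ms}"

definition grid_adj :: "nat \<times> nat \<Rightarrow> nat \<times> nat \<Rightarrow> bool" where
  "grid_adj u v \<longleftrightarrow>
     \<bar>int (fst u) - int (fst v)\<bar> + \<bar>int (snd u) - int (snd v)\<bar> = 1"

text \<open>Configurations: bijections from robot labels 1..ml*ms onto the vertex set
  (extensional outside the label set, so that the set of configurations is finite).\<close>
definition configs :: "nat \<Rightarrow> nat \<Rightarrow> (nat \<Rightarrow> nat \<times> nat) set" where
  "configs ml ms = {X. X \<in> extensional {1..ml*ms} \<and> bij_betw X {1..ml*ms} (grid_vertices ml ms)}"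

text \<open>One synchronous step: every robot stays or moves to an adjacent vertex,
  no two robots end at the same vertex, and no two robots swap along an edge.\<close>
definition valid_step :: "nat \<Rightarrow> nat \<Rightarrow> (nat \<Rightarrow> nat \<times> nat) \<Rightarrow> (nat \<Rightarrow> nat \<times> nat) \<Rightarrow> bool" where
  "valid_step ml ms X Y \<longleftrightarrow>
     X \<in> configs ml ms \<and> Y \<in> configs ml ms \<and>
     (\<forall>r\<in>{1..ml*ms}. Y r = X r \<or> grid_adj (X r) (Y r)) \<and>
     inj_on Y {1..ml*ms} \<and>
     (\<forall>r\<in>{1..ml*ms}. \<forall>r'\<in>{1..ml*ms}. r \<noteq> r' \<and> Y r = X r' \<longrightarrow> Y r' \<noteq> X r)"

definition makespan_at_most :: "nat \<Rightarrow> nat \<Rightarrow> (nat \<Rightarrow> nat \<times> nat) \<Rightarrow> (nat \<Rightarrow> nat \<times> nat) \<Rightarrow> real \<Rightarrow> bool" where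
  "makespan_at_most ml ms XI XG t \<longleftrightarrow> (\<exists>k::nat. real k \<le> t \<and> (valid_step ml ms ^^ k) XI XG)"

end

theory Submission
  imports Defs "HOL-Combinatorics.Permutations"
begin

lemma pow_fact_le_exp: "(x::real) \<ge> 0 \<Longrightarrow> x ^ n / fact n \<le> exp x"
proof -
  assume x: "x \<ge> 0"
  have "x ^ n / fact n \<le> (\<Sum>k\<in>{n}. x ^ k / fact k)" by simp
  also have "\<dots> \<le> (\<Sum>k. x ^ k / fact k)"
    by (rule sum_le_suminf) (use summable_exp[of x] x in \<open>auto simp: divide_inverse ac_simps\<close>)
  also have "\<dots> = exp x" by (simp add: exp_def divide_inverse ac_simps)
  finally show ?thesis .
qed

lemma fact_lower: "(real n / 3) ^ n \<le> fact n"
proof -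
  have "real n ^ n / fact n \<le> exp (real n)" by (rule pow_fact_le_exp) simp
  also have "exp (real n) = exp 1 ^ n" using exp_of_nat_mult[of n 1] by simp
  also have "\<dots> \<le> 3 ^ n" using exp_le by (intro power_mono) auto
  finally have "real n ^ n \<le> 3 ^ n * fact n" by (simp add: divide_le_eq)
  then show ?thesis by (simp add: power_divide divide_le_eq mult.commute)
qed

definition d1 :: "nat \<times> nat \<Rightarrow> nat \<times> nat \<Rightarrow> int" where
  "d1 u v = \<bar>int (fst u) - int (fst v)\<bar> + \<bar>int (snd u) - int (snd v)\<bar>"

lemma step_dist:
  assumes "(valid_step ml ms ^^ k) X Y" "X \<in> configs ml ms"
  shows "Y \<in> configs ml ms \<and> (\<forall>r\<in>{1..ml*ms}. d1 (X r) (Y r) \<le> int k)"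
  using assms(1)
proof (induction k arbitrary: Y)
  case 0 then show ?case using assms(2) by (simp add: d1_def)
next
  case (Suc k)
  from Suc.prems obtain Z where Z: "(valid_step ml ms ^^ k) X Z" "valid_step ml ms Z Y"
    by (rule relpowp_Suc_E)
  from Suc.IH[OF Z(1)] have ih: "\<forall>r\<in>{1..ml*ms}. d1 (X r) (Z r) \<le> int k" by blast
  show ?case
  proof (intro conjI ballI)
    show "Y \<in> configs ml ms" using Z(2) by (simp add: valid_step_def)
    fix r assume r: "r \<in> {1..ml*ms}"
    have "Y r = Z r \<or> grid_adj (Z r) (Y r)" using Z(2) r by (simp add: valid_step_def)
    then have a: "d1 (Z r) (Y r) \<le> 1" by (auto simp: d1_def grid_adj_def)
    have b: "d1 (X r) (Z r) \<le> int k" using ih r by blast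
    have c: "d1 (X r) (Y r) \<le> d1 (X r) (Z r) + d1 (Z r) (Y r)" by (simp add: d1_def; arith)
    show "d1 (X r) (Y r) \<le> int (Suc k)" using a b c by simp
  qed
qed

lemma configs_sub: "configs ml ms \<subseteq> PiE {1..ml*ms} (\<lambda>_. grid_vertices ml ms)"
proof
  fix X assume "X \<in> configs ml ms"
  then have "X \<in> extensional {1..ml*ms}" "bij_betw X {1..ml*ms} (grid_vertices ml ms)"
    unfolding configs_def by auto
  then show "X \<in> PiE {1..ml*ms} (\<lambda>_. grid_vertices ml ms)"
    unfolding PiE_iff by (blast intro: bij_betw_apply)
qed

lemma configs_finite: "finite (configs ml ms)"
  by (rule finite_subset[OF configs_sub]) (auto simp: grid_vertices_def intro!: finite_PiE)

lemma reach_subset: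
  assumes "Y \<in> configs ml ms" "\<forall>r\<in>{1..ml*ms}. d1 (X r) (Y r) \<le> int T"
  shows "Y \<in> PiE {1..ml*ms} (\<lambda>r. {fst (X r) - T..fst (X r) + T} \<times> {1..ms})"
proof -
  have "Y \<in> PiE {1..ml*ms} (\<lambda>_. grid_vertices ml ms)" using assms(1) configs_sub by blast
  then show ?thesis using assms(2)
    by (fastforce simp: PiE_iff grid_vertices_def d1_def mem_Times_iff)
qed

lemma nb_card: "card ({a - T..a + T} \<times> {1..ms::nat}) \<le> (2*T+1)*ms"
proof -
  have "Suc (a+T) - (a-T) \<le> 2*T+1" by arith
  then have "(Suc (a+T) - (a-T)) * ms \<le> (2*T+1)*ms" by (rule mult_right_mono) simp
  then show ?thesis by (simp add: card_cartesian_product)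
qed

lemma card_configs: "fact (ml*ms) \<le> card (configs ml ms)"
proof -
  let ?S = "{1..ml*ms}" and ?G = "grid_vertices ml ms"
  have cG: "card ?G = card ?S" by (simp add: grid_vertices_def card_cartesian_product)
  have fG: "finite ?G" by (simp add: grid_vertices_def)
  obtain g where g: "bij_betw g ?S ?G"
    using finite_same_card_bij[OF finite_atLeastAtMost fG] cG by metis
  let ?h = "\<lambda>p. restrict (g \<circ> p) ?S"
  have "inj_on ?h {p. p permutes ?S}"
  proof (rule inj_onI)
    fix p q assume p0: "p \<in> {p. p permutes ?S}" and q0: "q \<in> {p. p permutes ?S}"
      and e: "?h p = ?h q"
    have p: "p permutes ?S" using p0 by blast
    have q: "q permutes ?S" using q0 by blast
    show "p = q"
    proof
      fix x show "p x = q x"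
      proof (cases "x \<in> ?S")
        case True
        have "?h p x = ?h q x" using e by (rule arg_cong)
        then have "g (p x) = g (q x)" using True by (simp only: restrict_apply' comp_apply)
        moreover have "p x \<in> ?S" using permutes_in_image[OF p, of x] True by blast
        moreover have "q x \<in> ?S" using permutes_in_image[OF q, of x] True by blast
        ultimately show ?thesis using g unfolding bij_betw_def inj_on_def by blast
      next
        case False then show ?thesis using p q permutes_not_in by metis
      qed
    qed
  qed
  moreover have "?h ` {p. p permutes ?S} \<subseteq> configs ml ms"
  proof
    fix Y assume "Y \<in> ?h ` {p. p permutes ?S}"
    then obtain p where p: "p permutes ?S" and Y: "Y = ?h p" by blast
    have b1: "bij_betw (g \<circ> p) ?S ?G" using bij_betw_trans[OF permutes_imp_bij[OF p] g] .
    have "bij_betw Y ?S ?G \<longleftrightarrow> bij_betw (g \<circ> p) ?S ?G"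
      by (rule bij_betw_cong) (simp only: Y restrict_apply')
    then have "bij_betw Y ?S ?G" using b1 by blast
    moreover have "Y \<in> extensional ?S" unfolding Y by (rule restrict_extensional)
    ultimately show "Y \<in> configs ml ms" unfolding configs_def by blast
  qed
  ultimately have "card {p. p permutes ?S} \<le> card (configs ml ms)"
    using card_inj_on_le configs_finite by blast
  moreover have "card {p. p permutes ?S} = fact (ml*ms)"
    using card_permutations[of ?S "ml*ms"] by simp
  ultimately show ?thesis by simp
qed

theorem lemma5:
  fixes f :: "nat \<Rightarrow> nat \<Rightarrow> real"
  assumes f_small_o: "\<forall>\<epsilon>>0. \<exists>K. \<forall>ml ms. ml \<ge> ms \<and> ms \<ge> 2 \<and> ml + ms \<ge> K \<longrightarrow>
                     \<bar>f ml ms\<bar> \<le> \<epsilon> * real (ml + ms)"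
  shows "\<exists>N. \<forall>ml ms. ml \<ge> ms \<and> ms \<ge> 2 \<and> ml * ms \<ge> N \<longrightarrow>
           real (card {(XI, XG). XI \<in> configs ml ms \<and> XG \<in> configs ml ms \<and>
                                 makespan_at_most ml ms XI XG (f ml ms)})
           / real (card (configs ml ms \<times> configs ml ms))
           \<le> (1/2) powr (real ml / 4)"
proof -
  obtain K where K: "\<forall>ml ms. ml \<ge> ms \<and> ms \<ge> 2 \<and> ml + ms \<ge> K \<longrightarrow>
                     \<bar>f ml ms\<bar> \<le> (1/48) * real (ml + ms)"
    using f_small_o by (metis divide_pos_pos zero_less_numeral zero_less_one)
  show ?thesis
  proof (intro exI allI impI)
    fix ml ms :: nat
    assume A: "ms \<le> ml \<and> 2 \<le> ms \<and> (K+12)*(K+12) \<le> ml * ms"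
    have "ml * ms \<le> ml * ml" using A by simp
    then have "(K+12)*(K+12) \<le> ml*ml" using A by linarith
    then have mlK: "K + 12 \<le> ml" using mult_le_mono[of ml "K+12" ml "K+12"]
      by (metis not_le mult_less_mono1 mult_strict_mono le0 le_less_trans less_le_trans)
    define t where "t = f ml ms"
    define T where "T = nat \<lfloor>t\<rfloor>"
    define n where "n = ml * ms"
    define C where "C = configs ml ms"
    define S where "S = {(XI, XG). XI \<in> configs ml ms \<and> XG \<in> configs ml ms \<and>
                                 makespan_at_most ml ms XI XG (f ml ms)}"
    define P where "P = (\<lambda>X::nat\<Rightarrow>nat\<times>nat. PiE {1..n} (\<lambda>r. {fst (X r) - T..fst (X r) + T} \<times> {1..ms}))"
    define M where "M = ((2*T+1)*ms)^n"
    have tb: "\<bar>t\<bar> \<le> (1/48) * real (ml + ms)" using K A mlK unfolding t_def by auto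
    have Tb: "real T \<le> real ml / 24"
    proof (cases "t \<ge> 0")
      case True
      then have "real T \<le> t" unfolding T_def by simp
      then show ?thesis using tb A by simp
    next
      case False then show ?thesis unfolding T_def by simp
    qed
    have SP: "S \<subseteq> Sigma C P"
    proof
      fix z assume "z \<in> S"
      then obtain XI XG k where z: "z = (XI, XG)" and XI: "XI \<in> C"
        and k: "real k \<le> t" "(valid_step ml ms ^^ k) XI XG"
        unfolding S_def C_def makespan_at_most_def t_def by blast
      have "k \<le> T" using k(1) unfolding T_def by linarith
      with step_dist[OF k(2) XI[unfolded C_def]]
      have "XG \<in> C" "\<forall>r\<in>{1..ml*ms}. d1 (XI r) (XG r) \<le> int T" unfolding C_def by auto
      then have "XG \<in> P XI" unfolding P_def n_def C_def by (rule reach_subset)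
      then show "z \<in> Sigma C P" using z XI by blast
    qed
    have finC: "finite C" unfolding C_def by (rule configs_finite)
    have finP: "\<And>X. finite (P X)" unfolding P_def by (auto intro!: finite_PiE)
    have cP: "card (P X) \<le> M" for X
    proof -
      have "card (P X) = (\<Prod>r\<in>{1..n}. card ({fst (X r) - T..fst (X r) + T} \<times> {1..ms}))"
        unfolding P_def by (rule card_PiE) simp
      also have "\<dots> \<le> (\<Prod>r\<in>{1..n}. (2*T+1)*ms)" by (intro prod_mono conjI le0 nb_card)
      also have "\<dots> = M" by (simp add: M_def)
      finally show ?thesis .
    qed
    have "card S \<le> card (Sigma C P)"
      using SP finC finP by (intro card_mono) auto
    also have "\<dots> = (\<Sum>X\<in>C. card (P X))" using finC finP by (simp add: card_SigmaI)
    also have "\<dots> \<le> (\<Sum>X\<in>C. M)" by (rule sum_mono) (rule cP)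
    also have "\<dots> = card C * M" by simp
    finally have sC: "card S \<le> card C * M" .
    have cC: "fact n \<le> card C" unfolding C_def n_def by (rule card_configs)
    have fpos: "(0::real) < fact n" by simp
    have cCr: "(fact n::real) \<le> real (card C)" using cC by (metis of_nat_fact of_nat_le_iff)
    have cpos: "0 < real (card C)" using cCr fpos by linarith
    have "real (card S) / real (card (C \<times> C)) = real (card S) / (real (card C) * real (card C))"
      by (simp add: card_cartesian_product)
    also have "\<dots> \<le> real (card C * M) / (real (card C) * real (card C))"
      using sC cpos by (intro divide_right_mono) (simp_all only: of_nat_le_iff zero_le_mult_iff of_nat_0_le_iff, simp)
    also have "\<dots> = real M / real (card C)" using cpos by simp
    also have "\<dots> \<le> real M / fact n" by (rule divide_left_mono[OF cCr]) (simp_all add: mult_pos_pos[OF cpos fpos])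
    also have "\<dots> \<le> (1/2) ^ n"
    proof -
      have mlms: "real n = real ml * real ms" unfolding n_def by simp
      have "real ((2*T+1)*ms) * 2 \<le> real n / 3"
      proof -
        have "6 * (2 * real T + 1) \<le> real ml" using Tb mlK by (simp add: of_nat_le_iff[symmetric] del: of_nat_le_iff)
        then have "6 * (2 * real T + 1) * real ms \<le> real ml * real ms"
          by (intro mult_right_mono) auto
        then show ?thesis unfolding mlms by (simp add: algebra_simps)
      qed
      then have "(real ((2*T+1)*ms) * 2) ^ n \<le> (real n / 3) ^ n" by (intro power_mono) auto
      also have "\<dots> \<le> fact n" by (rule fact_lower)
      finally have fin: "(real ((2*T+1)*ms) * 2) ^ n \<le> fact n" .
      have "real M * 2 ^ n = (real ((2*T+1)*ms) * 2) ^ n"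
        using of_nat_power[of "(2*T+1)*ms" n, folded M_def, where 'a=real]
        by (simp only: power_mult_distrib)
      then have "real M * 2 ^ n \<le> fact n" using fin by simp
      then show ?thesis using fpos by (simp add: divide_le_eq power_divide field_simps)
    qed
    also have "\<dots> = (1/2) powr real n" by (simp add: powr_realpow)
    also have "\<dots> \<le> (1/2) powr (real ml / 4)"
    proof (rule powr_mono')
      have "ml \<le> n" unfolding n_def using A by simp
      then show "real ml / 4 \<le> real n" by simp
    qed auto
    finally show "real (card {(XI, XG). XI \<in> configs ml ms \<and> XG \<in> configs ml ms \<and>
                                 makespan_at_most ml ms XI XG (f ml ms)})
           / real (card (configs ml ms \<times> configs ml ms))
           \<le> (1/2) powr (real ml / 4)" unfolding S_def C_def .
  qed
qed

end
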